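(* There is an absolute constant $C>0$ such that the following holds. Let $Q$ be a $\pi$-periodic function in $L^2([0,\pi])$ with $Q(x)=\sum_{k\in2\mathbb{Z}}q(k)e^{ikx}=\sum_{m\ge1}\tilde q(m)\sqrt2\sin mx$, and put $q=(q(k))_{k\in2\mathbb{Z}}$, $\tilde q=(\tilde q(m))_{m\in\mathbb{N}}$. Then for every integer $n\ge3$: (i) if $bc=Per^+$ and $n$ is even, or $bc=Per^-$ and $n$ is odd, $$\|K_\lambda VK_\lambda\|_{HS}\le C\Big(\mathcal{E}_{\sqrt n}(q)+\frac{\|q\|}{\sqrt n}\Big)\quad\text{for all }\lambda\in H_n\setminus D_n;$$ (ii) if $bc=Dir$, $$\|K_\lambda VK_\lambda\|_{HS}\le C\Big(\mathcal{E}_{\sqrt n}(\tilde q)+\frac{\|\tilde q\|}{\sqrt n}\Big)\quad\text{for all }\lambda\in G_n\setminus D_n.$$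
   Context: Coefficients are taken w.r.t. the orthonormal bases $\{e^{ikx}\}_{k\in2\mathbb{Z}}$ and $\{\sqrt2\sin mx\}_{m\ge1}$ of $L^2([0,\pi])$ with inner product $\frac1\pi\int_0^\pi f\overline g$; $\|\cdot\|$ is the $\ell^2$ norm. Index sets: $\Gamma_{Per^+}=2\mathbb{Z}$, $\Gamma_{Per^-}=1+2\mathbb{Z}$, $\Gamma_{Dir}=\mathbb{N}$. The matrix $V=(V_{jm})_{j,m\in\Gamma_{bc}}$ is: for $bc=Per^\pm$, $V_{jm}=i(j-m)q(j-m)$; for $bc=Dir$, $V_{jm}=\frac1{\sqrt2}\big(|j-m|\tilde q(|j-m|)-(j+m)\tilde q(j+m)\big)$ with $\tilde q(0)=0$. For $\lambda\notin\{j^2:j\in\Gamma_{bc}\}$, $K_\lambda$ is the diagonal matrix with entries $(\lambda-j^2)^{-1/2}$, $j\in\Gamma_{bc}$, where $z^{1/2}=\sqrt r e^{i\varphi/2}$ for $z=re^{i\varphi}$, $0\le\varphi<2\pi$; thus $(K_\lambda VK_\lambda)_{jm}=V_{jm}(\lambda-j^2)^{-1/2}(\lambda-m^2)^{-1/2}$, and $\|A\|_{HS}=(\sum_{j,m}|A_{jm}|^2)^{1/2}$. Regions: $H_n=\{\lambda:(n-1)^2\le\mathrm{Re}\,\lambda\le(n+1)^2\}$, $G_n=\{\lambda:(n-1)n\le\mathrm{Re}\,\lambda\le n(n+1)\}$ ($n\ge2$), $D_n=\{\lambda:|\lambda-n^2|<n/4\}$. For a sequence $x$ indexed by a subset of $\mathbb{Z}$,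 $\mathcal{E}_m(x)=(\sum_{|j|\ge m}|x(j)|^2)^{1/2}$. *)

theory Defs
  imports "HOL-Analysis.Analysis"
begin

datatype bc = Per_plus | Per_minus | Dir

fun Gamma :: "bc \<Rightarrow> int set" where
  "Gamma Per_plus = {j. even j}"
| "Gamma Per_minus = {j. odd j}"
| "Gamma Dir = {j. j \<ge> 1}"

definition arg02 :: "complex \<Rightarrow> real" where
  "arg02 z = (if Arg z \<ge> 0 then Arg z else Arg z + 2 * pi)"

definition sqrt_br :: "complex \<Rightarrow> complex" where
  "sqrt_br z = complex_of_real (sqrt (cmod z)) * exp (\<i> * complex_of_real (arg02 z / 2))"

definition V_per :: "(int \<Rightarrow> complex) \<Rightarrow> int \<Rightarrow> int \<Rightarrow> complex" where
  "V_per q j m = \<i> * of_int (j - m) * q (j - m)"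

definition V_dir :: "(nat \<Rightarrow> complex) \<Rightarrow> int \<Rightarrow> int \<Rightarrow> complex" where
  "V_dir qt j m = (of_int \<bar>j - m\<bar> * qt (nat \<bar>j - m\<bar>) - of_int (j + m) * qt (nat (j + m)))
                   / complex_of_real (sqrt 2)"

definition KVK :: "(int \<Rightarrow> int \<Rightarrow> complex) \<Rightarrow> complex \<Rightarrow> int \<Rightarrow> int \<Rightarrow> complex" where
  "KVK V lam j m = V j m / (sqrt_br (lam - of_int (j^2)) * sqrt_br (lam - of_int (m^2)))"

text \<open>Hilbert-Schmidt norm of a matrix indexed by I x I (meaningful when summable).\<close>
definition hs_norm :: "(int \<Rightarrow> int \<Rightarrow> complex) \<Rightarrow> int set \<Rightarrow> real" where
  "hs_norm A I = sqrt (\<Sum>\<^sub>\<infinity>(j, m)\<in>I \<times> I. (cmod (A j m))^2)"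

definition hs_finite :: "(int \<Rightarrow> int \<Rightarrow> complex) \<Rightarrow> int set \<Rightarrow> bool" where
  "hs_finite A I \<longleftrightarrow> (\<lambda>(j, m). (cmod (A j m))^2) summable_on (I \<times> I)"

definition l2n :: "('a \<Rightarrow> complex) \<Rightarrow> 'a set \<Rightarrow> real" where
  "l2n x I = sqrt (\<Sum>\<^sub>\<infinity>j\<in>I. (cmod (x j))^2)"

definition tail_int :: "(int \<Rightarrow> complex) \<Rightarrow> int set \<Rightarrow> real \<Rightarrow> real" where
  "tail_int x I t = l2n x {j \<in> I. real_of_int \<bar>j\<bar> \<ge> t}"

definition tail_nat :: "(nat \<Rightarrow> complex) \<Rightarrow> nat set \<Rightarrow> real \<Rightarrow> real" where
  "tail_nat x I t = l2n x {j \<in> I. real j \<ge> t}"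

definition H_reg :: "nat \<Rightarrow> complex set" where
  "H_reg n = {lam. (real n - 1)^2 \<le> Re lam \<and> Re lam \<le> (real n + 1)^2}"

definition G_reg :: "nat \<Rightarrow> complex set" where
  "G_reg n = {lam. (real n - 1) * real n \<le> Re lam \<and> Re lam \<le> real n * (real n + 1)}"

definition D_reg :: "nat \<Rightarrow> complex set" where
  "D_reg n = {lam. cmod (lam - of_nat (n^2)) < real n / 4}"

end

theory Submission
  imports Defs
begin


lemma cmod_sqrt_br: "cmod (sqrt_br z) = sqrt (cmod z)"
  unfolding sqrt_br_def by (simp add: norm_mult)

lemma KVK_sq: "(cmod (KVK V lam j m))^2 =
   (cmod (V j m))^2 / (cmod (lam - of_int (j^2)) * cmod (lam - of_int (m^2)))"
  unfolding KVK_def by (simp add: norm_divide norm_mult cmod_sqrt_br power_divide power_mult_distrib)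

definition hh :: "nat \<Rightarrow> real" where "hh d = 1 / (max 1 (real d) * (real d + 1))"

lemma hh_nonneg: "0 \<le> hh d" unfolding hh_def by simp

lemma hh_partial: "(\<Sum>d\<le>M. hh d) = 2 - 1 / (real M + 1)"
proof (induction M)
  case 0 then show ?case by (simp add: hh_def)
next
  case (Suc M)
  have "hh (Suc M) = 1/(real M + 1) - 1/(real M + 2)"
    unfolding hh_def by (simp add: field_simps max_def)
  then show ?case using Suc by (simp add: add.commute)
qed

lemma hh_sum: assumes "finite D" shows "(\<Sum>d\<in>D. hh d) \<le> 2"
proof -
  have "D \<subseteq> {..Max D}" using assms by (auto simp: Max_ge)
  then have "(\<Sum>d\<in>D. hh d) \<le> (\<Sum>d\<le>Max D. hh d)"
    by (intro sum_mono2) (auto simp: hh_nonneg)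
  also have "\<dots> \<le> 2" by (simp add: hh_partial)
  finally show ?thesis .
qed

definition dd :: "nat \<Rightarrow> int \<Rightarrow> nat" where "dd n j = nat \<bar>\<bar>j\<bar> - int n\<bar>"

lemma card4: "card {a::int, b, c, d} \<le> 4"
  using card_length[of "[a,b,c,d]"] by simp

lemma lattice_sum:
  assumes "finite J" shows "(\<Sum>j\<in>J. hh (dd n j)) \<le> 8"
proof -
  have "(\<Sum>j\<in>J. hh (dd n j)) = (\<Sum>e\<in>dd n ` J. (\<Sum>j\<in>{j\<in>J. dd n j = e}. hh (dd n j)))"
    using assms by (rule sum.image_gen)
  also have "\<dots> = (\<Sum>e\<in>dd n ` J. of_nat (card {j\<in>J. dd n j = e}) * hh e)"
    by (intro sum.cong refl) simp
  also have "\<dots> \<le> (\<Sum>e\<in>dd n ` J. 4 * hh e)"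
  proof (intro sum_mono mult_right_mono hh_nonneg)
    fix e assume "e \<in> dd n ` J"
    have "{j\<in>J. dd n j = e} \<subseteq> {int n + int e, int n - int e, -(int n + int e), -(int n - int e)}"
      by (auto simp: dd_def)
    then have "card {j\<in>J. dd n j = e} \<le> 4"
      using card4 card_mono by (meson finite.emptyI finite.insertI order_trans)
    then show "real (card {j\<in>J. dd n j = e}) \<le> 4" by simp
  qed
  also have "\<dots> = 4 * (\<Sum>e\<in>dd n ` J. hh e)" by (simp add: sum_distrib_left)
  also have "\<dots> \<le> 8" using hh_sum[of "dd n ` J"] assms by simp
  finally show ?thesis .
qed



lemma re_bound: "cmod (lam - of_int (j^2)) \<ge> \<bar>Re lam - (real_of_int \<bar>j\<bar>)^2\<bar>"
proof -
  have "Re (lam - of_int (j^2)) = Re lam - (real_of_int \<bar>j\<bar>)^2" by simp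
  then show ?thesis using abs_Re_le_cmod[of "lam - of_int (j^2)"] by simp
qed

lemma dd_real: "real (dd n j) = \<bar>real_of_int \<bar>j\<bar> - real n\<bar>"
  unfolding dd_def by simp

lemma D_bound: assumes "lam \<notin> D_reg n" "\<bar>j\<bar> = int n"
  shows "cmod (lam - of_int (j^2)) \<ge> real n / 4"
proof -
  have "of_int (j^2) = (of_nat (n^2) :: complex)"
    using assms(2) by (metis of_int_of_nat_eq of_nat_power power2_abs)
  then show ?thesis using assms(1) unfolding D_reg_def by simp
qed

lemma lb_per:
  assumes n3: "n \<ge> 3" and lam: "lam \<in> H_reg n - D_reg n" and par: "even j = even n"
  shows "cmod (lam - of_int (j^2)) \<ge> max 1 (real (dd n j)) * (real n + real (dd n j)) / 6"
proof -
  define x where "x = Re lam"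
  define t where "t = \<bar>j\<bar>"
  have x1: "(real n - 1)^2 \<le> x" and x2: "x \<le> (real n + 1)^2" using lam by (auto simp: H_reg_def x_def)
  have rb: "cmod (lam - of_int (j^2)) \<ge> \<bar>x - (real_of_int t)^2\<bar>" using re_bound x_def t_def by simp
  have t0: "t \<ge> 0" by (simp add: t_def)
  have part: "even t = even (int n)" using par by (simp add: t_def)
  consider "t = int n" | "t \<ge> int n + 2" | "t \<le> int n - 2"
  proof -
    have "t \<noteq> int n + 1" "t \<noteq> int n - 1" using part by auto
    then show ?thesis using that by linarith
  qed
  then show ?thesis
  proof cases
    case 1
    then have "dd n j = 0" by (simp add: dd_def t_def)
    moreover have "cmod (lam - of_int (j^2)) \<ge> real n / 4" using D_bound lam 1 t_def by auto
    ultimately show ?thesis by simp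
  next
    case 2
    define v where "v = real_of_int t - real n"
    have v2: "v \<ge> 2" using 2 v_def by simp
    have dv: "real (dd n j) = v" using dd_real[of n j] v2 v_def t_def by simp
    have "max 1 v * (real n + v) / 6 \<le> (real n + v)^2 - (real n + 1)^2"
    proof -
      have "max 1 v = v" using v2 by simp
      moreover have "v * real n \<ge> 2 * real n" "v * v \<ge> 4" using v2 mult_right_mono[OF v2, of "real n"] mult_mono[OF v2 v2] by auto
      moreover have "6 * ((real n + v)^2 - (real n + 1)^2) - v * (real n + v) = 11 * (v * real n) + 5 * (v * v) - 12 * real n - 6"
        by (simp add: power2_eq_square algebra_simps)
      moreover have "v * (real n + v) \<le> 6 * ((real n + v)^2 - (real n + 1)^2)"
        using n3 calculation(2,3,4) by linarith
      ultimately show ?thesis by simp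
    qed
    also have "\<dots> \<le> \<bar>x - (real_of_int t)^2\<bar>" using x2 v_def by simp
    finally show ?thesis using rb dv by simp
  next
    case 3
    define u where "u = real n - real_of_int t"
    have u2: "u \<ge> 2" using 3 u_def by simp
    have un: "u \<le> real n" using t0 u_def by simp
    have du: "real (dd n j) = u" using dd_real[of n j] u2 u_def t_def by simp
    have "max 1 u * (real n + u) / 6 \<le> (real n - 1)^2 - (real n - u)^2"
    proof -
      have "max 1 u = u" using u2 by simp
      moreover have "0 \<le> 7 * ((u - 2) * (real n - u))" using u2 un by simp
      moreover have "u * real n \<ge> u * 3" using n3 u2 by (intro mult_left_mono) auto
      moreover have "6 * ((real n - 1)^2 - (real n - u)^2) - u * (real n + u) = 11 * (u * real n) - 7 * (u * u) - 12 * real n + 6"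
        by (simp add: power2_eq_square algebra_simps)
      moreover have "7 * ((u - 2) * (real n - u)) = 7 * (u * real n) - 7 * (u * u) - 14 * real n + 14 * u"
        by (simp add: algebra_simps)
      moreover have "u * (real n + u) \<le> 6 * ((real n - 1)^2 - (real n - u)^2)"
        using u2 un n3 calculation(2-5) by linarith
      ultimately show ?thesis by simp
    qed
    also have "\<dots> \<le> \<bar>x - (real_of_int t)^2\<bar>" using x1 u_def by simp
    finally show ?thesis using rb du by simp
  qed
qed



lemma lb_dir:
  assumes n3: "n \<ge> 3" and lam: "lam \<in> G_reg n - D_reg n" and j1: "j \<ge> 1"
  shows "cmod (lam - of_int (j^2)) \<ge> max 1 (real (dd n j)) * (real n + real (dd n j)) / 6"
proof -
  define x where "x = Re lam"
  define t where "t = \<bar>j\<bar>"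
  have x1: "(real n - 1) * real n \<le> x" and x2: "x \<le> real n * (real n + 1)" using lam by (auto simp: G_reg_def x_def)
  have rb: "cmod (lam - of_int (j^2)) \<ge> \<bar>x - (real_of_int t)^2\<bar>" using re_bound x_def t_def by simp
  have t0: "t \<ge> 1" using j1 by (simp add: t_def)
  consider "t = int n" | "t \<ge> int n + 1" | "t \<le> int n - 1" by linarith
  then show ?thesis
  proof cases
    case 1
    then have "dd n j = 0" by (simp add: dd_def t_def)
    moreover have "cmod (lam - of_int (j^2)) \<ge> real n / 4" using D_bound lam 1 t_def by auto
    ultimately show ?thesis by simp
  next
    case 2
    define v where "v = real_of_int t - real n"
    have v2: "v \<ge> 1" using 2 v_def by simp
    have dv: "real (dd n j) = v" using dd_real[of n j] v2 v_def t_def by simp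
    have "max 1 v * (real n + v) / 6 \<le> (real n + v)^2 - real n * (real n + 1)"
    proof -
      have "max 1 v = v" using v2 by simp
      moreover have "v * real n \<ge> real n" "v * v \<ge> 1" using v2 mult_right_mono[OF v2, of "real n"] mult_mono[OF v2 v2] by auto
      moreover have "6 * ((real n + v)^2 - real n * (real n + 1)) - v * (real n + v) = 11 * (v * real n) + 5 * (v * v) - 6 * real n"
        by (simp add: power2_eq_square algebra_simps)
      moreover have "v * (real n + v) \<le> 6 * ((real n + v)^2 - real n * (real n + 1))"
        using n3 calculation(2,3,4) by linarith
      ultimately show ?thesis by simp
    qed
    also have "\<dots> \<le> \<bar>x - (real_of_int t)^2\<bar>" using x2 v_def by simp
    finally show ?thesis using rb dv by simp
  next
    case 3
    define u where "u = real n - real_of_int t"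
    have u2: "u \<ge> 1" using 3 u_def by simp
    have un: "u \<le> real n - 1" using t0 u_def by simp
    have du: "real (dd n j) = u" using dd_real[of n j] u2 u_def t_def by simp
    have "max 1 u * (real n + u) / 6 \<le> (real n - 1) * real n - (real n - u)^2"
    proof -
      have "max 1 u = u" using u2 by simp
      moreover have "0 \<le> 7 * ((u - 1) * (real n - 1 - u))" using u2 un by simp
      moreover have "u * real n \<ge> real n" using n3 u2 mult_right_mono[OF u2, of "real n"] by auto
      moreover have "6 * ((real n - 1) * real n - (real n - u)^2) - u * (real n + u) = 11 * (u * real n) - 7 * (u * u) - 6 * real n"
        by (simp add: power2_eq_square algebra_simps)
      moreover have "7 * ((u - 1) * (real n - 1 - u)) = 7 * (u * real n) - 7 * (u * u) - 7 * real n + 7"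
        by (simp add: algebra_simps)
      moreover have "u * (real n + u) \<le> 6 * ((real n - 1) * real n - (real n - u)^2)"
        using u2 un n3 calculation(2-5) by linarith
      ultimately show ?thesis by simp
    qed
    also have "\<dots> \<le> \<bar>x - (real_of_int t)^2\<bar>" using x1 u_def by simp
    finally show ?thesis using rb du by simp
  qed
qed

lemma sq_le_per:
  assumes "lam \<in> H_reg n"
  shows "(real_of_int j)^2 \<le> cmod (lam - of_int (j^2)) + (real n + 1)^2"
proof -
  have "(real_of_int j)^2 = (real_of_int \<bar>j\<bar>)^2" by simp
  moreover have "Re lam \<le> (real n + 1)^2" using assms by (simp add: H_reg_def)
  ultimately show ?thesis using re_bound[of lam j] by linarith
qed

lemma sq_le_dir:
  assumes "lam \<in> G_reg n"
  shows "(real_of_int j)^2 \<le> cmod (lam - of_int (j^2)) + (real n + 1)^2"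
proof -
  have "(real_of_int j)^2 = (real_of_int \<bar>j\<bar>)^2" by simp
  moreover have "Re lam \<le> real n * (real n + 1)" using assms by (simp add: G_reg_def)
  moreover have "real n * (real n + 1) \<le> (real n + 1)^2" by (simp add: power2_eq_square)
  ultimately show ?thesis using re_bound[of lam j] by linarith
qed

lemma inv_bounds:
  fixes A D N :: real
  assumes "A \<ge> max 1 D * (N + D) / 6" "D \<ge> 0" "N \<ge> 1"
  shows "A > 0" "1 / A \<le> 6 / (max 1 D * (D + 1))" "1 / A^2 \<le> 72 / N^2 * (1 / (max 1 D * (D + 1)))"
proof -
  have M1: "max 1 D \<ge> 1" by simp
  have L0: "max 1 D * (N + D) / 6 > 0" using assms M1 by (intro divide_pos_pos mult_pos_pos) auto
  then show A0: "A > 0" using assms by linarith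
  have "1 / A \<le> 1 / (max 1 D * (N + D) / 6)" using assms(1) L0 by (intro divide_left_mono) auto
  also have "\<dots> = 6 / (max 1 D * (N + D))" by simp
  also have "\<dots> \<le> 6 / (max 1 D * (D + 1))" using assms M1
    by (intro divide_left_mono mult_left_mono mult_pos_pos) auto
  finally show "1 / A \<le> 6 / (max 1 D * (D + 1))" .
  have "1 / A^2 \<le> 1 / (max 1 D * (N + D) / 6)^2" using assms(1) L0
    by (intro divide_left_mono power_mono mult_pos_pos) auto
  also have "\<dots> = 36 / ((max 1 D)^2 * (N + D)^2)" by (simp add: power_divide power_mult_distrib)
  also have "\<dots> \<le> 36 / ((max 1 D)^2 * N^2)" using assms M1
    by (intro divide_left_mono mult_left_mono mult_pos_pos power_mono) auto
  also have "\<dots> \<le> 72 / N^2 * (1 / (max 1 D * (D + 1)))"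
  proof -
    have "max 1 D * (D + 1) \<le> 2 * (max 1 D)^2" using M1 by (simp add: power2_eq_square max_def)
    then have "36 / ((max 1 D)^2 * N^2) \<le> 36 / (max 1 D * (D + 1) / 2 * N^2)"
      using M1 assms by (intro divide_left_mono mult_right_mono mult_pos_pos) auto
    then show ?thesis by (simp add: field_simps)
  qed
  finally show "1 / A^2 \<le> 72 / N^2 * (1 / (max 1 D * (D + 1)))" .
qed



lemma amgm_inv: fixes A B :: real assumes "A > 0" "B > 0"
  shows "2 / (A * B) \<le> 1 / A^2 + 1 / B^2"
proof -
  have "0 \<le> (1/A - 1/B)^2" by simp
  then show ?thesis using assms by (simp add: power2_eq_square field_simps)
qed

lemma term1: fixes A B c :: real assumes "A > 0" "B > 0"
  shows "c^2 / (A * B) \<le> c^2 / 2 * (1 / A^2 + 1 / B^2)"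
proof -
  have "c^2 / (A * B) = c^2 / 2 * (2 / (A * B))" by simp
  also have "\<dots> \<le> c^2 / 2 * (1 / A^2 + 1 / B^2)"
    using amgm_inv[OF assms] by (intro mult_left_mono) auto
  finally show ?thesis .
qed

lemma term2: fixes A B c J M N :: real assumes "A > 0" "B > 0" "c^2 \<le> 2 * (J + M)"
  "J \<le> A + N" "M \<le> B + N" "N \<ge> 0"
  shows "c^2 / (A * B) \<le> 2 / B + 2 / A + 2 * N * (1 / A^2 + 1 / B^2)"
proof -
  have "c^2 / (A * B) \<le> 2 * (A + B + 2 * N) / (A * B)"
    using assms by (intro divide_right_mono) auto
  also have "\<dots> = 2 / B + 2 / A + 2 * N * (2 / (A * B))" using assms by (simp add: field_simps)
  also have "\<dots> \<le> 2 / B + 2 / A + 2 * N * (1 / A^2 + 1 / B^2)"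
    using amgm_inv[OF assms(1,2)] assms by (intro add_left_mono mult_left_mono) auto
  finally show ?thesis .
qed

lemma sum_bounds:
  fixes a :: "int \<Rightarrow> real"
  assumes n3: "n \<ge> 3" and lb: "\<And>j. j \<in> G \<Longrightarrow> a j \<ge> max 1 (real (dd n j)) * (real n + real (dd n j)) / 6"
  shows "\<And>j. j \<in> G \<Longrightarrow> a j > 0"
    and "\<And>J. finite J \<Longrightarrow> J \<subseteq> G \<Longrightarrow> (\<Sum>j\<in>J. 1 / a j) \<le> 48"
    and "\<And>J. finite J \<Longrightarrow> J \<subseteq> G \<Longrightarrow> (\<Sum>j\<in>J. 1 / (a j)^2) \<le> 576 / (real n)^2"
proof -
  have ib: "a j > 0 \<and> 1 / a j \<le> 6 * hh (dd n j) \<and> 1 / (a j)^2 \<le> 72 / (real n)^2 * hh (dd n j)" if "j \<in> G" for j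
    using inv_bounds[OF lb[OF that], of] n3 unfolding hh_def by auto
  show "\<And>j. j \<in> G \<Longrightarrow> a j > 0" using ib by auto
  fix J assume J: "finite J" "J \<subseteq> G"
  have "(\<Sum>j\<in>J. 1 / a j) \<le> (\<Sum>j\<in>J. 6 * hh (dd n j))" using ib J by (intro sum_mono) auto
  also have "\<dots> = 6 * (\<Sum>j\<in>J. hh (dd n j))" by (simp add: sum_distrib_left)
  also have "\<dots> \<le> 48" using lattice_sum[OF J(1), of n] by simp
  finally show "(\<Sum>j\<in>J. 1 / a j) \<le> 48" .
  have "(\<Sum>j\<in>J. 1 / (a j)^2) \<le> (\<Sum>j\<in>J. 72 / (real n)^2 * hh (dd n j))" using ib J by (intro sum_mono) auto
  also have "\<dots> = 72 / (real n)^2 * (\<Sum>j\<in>J. hh (dd n j))" by (simp add: sum_distrib_left)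
  also have "\<dots> \<le> 72 / (real n)^2 * 8" using lattice_sum[OF J(1), of n] by (intro mult_left_mono) auto
  finally show "(\<Sum>j\<in>J. 1 / (a j)^2) \<le> 576 / (real n)^2" by simp
qed



lemma sum_fst: assumes "inj_on fst P" shows "(\<Sum>p\<in>P. f (fst p)) = (\<Sum>j\<in>fst ` P. f j)"
  using sum.reindex[OF assms, of f] by (simp add: comp_def)
lemma sum_snd: assumes "inj_on snd P" shows "(\<Sum>p\<in>P. f (snd p)) = (\<Sum>j\<in>snd ` P. f j)"
  using sum.reindex[OF assms, of f] by (simp add: comp_def)

lemma inner:
  fixes a :: "int \<Rightarrow> real" and c nn :: real
  assumes nn3: "nn \<ge> 3"
    and pos: "\<And>j. j \<in> G \<Longrightarrow> a j > 0"
    and S1: "\<And>J. finite J \<Longrightarrow> J \<subseteq> G \<Longrightarrow> (\<Sum>j\<in>J. 1 / a j) \<le> 48"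
    and S2: "\<And>J. finite J \<Longrightarrow> J \<subseteq> G \<Longrightarrow> (\<Sum>j\<in>J. 1 / (a j)^2) \<le> 576 / nn^2"
    and S3: "\<And>j. j \<in> G \<Longrightarrow> (real_of_int j)^2 \<le> a j + (nn + 1)^2"
    and P: "finite P" "P \<subseteq> G \<times> G" "inj_on fst P" "inj_on snd P"
    and cb: "\<And>j m. (j, m) \<in> P \<Longrightarrow> c^2 \<le> 2 * ((real_of_int j)^2 + (real_of_int m)^2)"
  shows "(\<Sum>p\<in>P. c^2 / (a (fst p) * a (snd p))) \<le> 4288 / nn + (if nn \<le> c^2 then 4288 else 0)"
proof -
  have fG: "fst ` P \<subseteq> G" "snd ` P \<subseteq> G" "finite (fst ` P)" "finite (snd ` P)" using P by auto
  have A2: "(\<Sum>p\<in>P. 1 / (a (fst p))^2) \<le> 576 / nn^2"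
    using S2[OF fG(3,1)] sum_fst[OF P(3), of "\<lambda>j. 1 / (a j)^2"] by simp
  have B2: "(\<Sum>p\<in>P. 1 / (a (snd p))^2) \<le> 576 / nn^2"
    using S2[OF fG(4,2)] sum_snd[OF P(4), of "\<lambda>j. 1 / (a j)^2"] by simp
  have A1: "(\<Sum>p\<in>P. 1 / a (fst p)) \<le> 48"
    using S1[OF fG(3,1)] sum_fst[OF P(3), of "\<lambda>j. 1 / a j"] by simp
  have B1: "(\<Sum>p\<in>P. 1 / a (snd p)) \<le> 48"
    using S1[OF fG(4,2)] sum_snd[OF P(4), of "\<lambda>j. 1 / a j"] by simp
  have posP: "a (fst p) > 0" "a (snd p) > 0" if "p \<in> P" for p using that P pos by auto
  show ?thesis
  proof (cases "nn \<le> c^2")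
    case False
    have "(\<Sum>p\<in>P. c^2 / (a (fst p) * a (snd p))) \<le> (\<Sum>p\<in>P. c^2 / 2 * (1 / (a (fst p))^2 + 1 / (a (snd p))^2))"
      using posP by (intro sum_mono term1) auto
    also have "\<dots> = c^2 / 2 * (\<Sum>p\<in>P. (1 / (a (fst p))^2 + 1 / (a (snd p))^2))"
      by (rule sum_distrib_left[symmetric])
    also have "\<dots> = c^2 / 2 * ((\<Sum>p\<in>P. 1 / (a (fst p))^2) + (\<Sum>p\<in>P. 1 / (a (snd p))^2))"
      by (simp add: sum.distrib)
    also have "\<dots> \<le> c^2 / 2 * (576 / nn^2 + 576 / nn^2)"
      using A2 B2 by (intro mult_left_mono add_mono) auto
    also have "\<dots> = c^2 * (576 / nn^2)" by simp
    also have "\<dots> \<le> nn * (576 / nn^2)" using False by (intro mult_right_mono) auto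
    also have "\<dots> = 576 / nn" using nn3 by (simp add: power2_eq_square)
    also have "\<dots> \<le> 4288 / nn" using nn3 by (intro divide_right_mono) auto
    finally show ?thesis using False by simp
  next
    case True
    define N where "N = (nn + 1)^2"
    have N0: "N \<ge> 0" by (simp add: N_def)
    have "(\<Sum>p\<in>P. c^2 / (a (fst p) * a (snd p))) \<le>
       (\<Sum>p\<in>P. 2 * (1 / a (snd p)) + 2 * (1 / a (fst p)) + 2 * N * (1 / (a (fst p))^2 + 1 / (a (snd p))^2))"
    proof (intro sum_mono)
      fix p assume p: "p \<in> P"
      obtain j m where jm: "p = (j, m)" by fastforce
      have jG: "j \<in> G" "m \<in> G" using p P jm by auto
      show "c^2 / (a (fst p) * a (snd p)) \<le> 2 * (1 / a (snd p)) + 2 * (1 / a (fst p)) + 2 * N * (1 / (a (fst p))^2 + 1 / (a (snd p))^2)"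
        using term2[OF posP[OF p] cb[of j m] _ _ N0]
          S3[OF jG(1)] S3[OF jG(2)] p jm N_def by simp
    qed
    also have "\<dots> = 2 * (\<Sum>p\<in>P. 1 / a (snd p)) + 2 * (\<Sum>p\<in>P. 1 / a (fst p)) + 2 * N * ((\<Sum>p\<in>P. 1 / (a (fst p))^2) + (\<Sum>p\<in>P. 1 / (a (snd p))^2))"
      by (simp only: sum_distrib_left[symmetric] sum.distrib)
    also have "\<dots> \<le> 2 * 48 + 2 * 48 + 2 * N * (576 / nn^2 + 576 / nn^2)"
      using A1 B1 A2 B2 N0 by (intro add_mono mult_left_mono) auto
    also have "\<dots> \<le> 4288"
    proof -
      have "N / nn^2 \<le> 16 / 9"
      proof -
        have "(nn + 1) \<le> 4 / 3 * nn" using nn3 by simp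
        then have "(nn + 1)^2 \<le> (4/3 * nn)^2" using nn3 by (intro power_mono) auto
        then show ?thesis using nn3 by (simp add: N_def field_simps power2_eq_square)
      qed
      then have "2304 * (N / nn^2) \<le> 2304 * (16/9)" by (intro mult_left_mono) auto
      moreover have "2 * N * (576 / nn^2 + 576 / nn^2) = 2304 * (N / nn^2)" by (simp add: field_simps)
      ultimately have "2 * N * (576 / nn^2 + 576 / nn^2) \<le> 2304 * (16/9)" by simp
      then show ?thesis by simp
    qed
    finally have f1: "(\<Sum>p\<in>P. c^2 / (a (fst p) * a (snd p))) \<le> 4288" .
    have f2: "4288 / nn \<ge> 0" using nn3 by simp
    have "(\<Sum>p\<in>P. c^2 / (a (fst p) * a (snd p))) \<le> 4288 / nn + 4288" using f1 f2 by linarith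
    then show ?thesis using True by simp
  qed
qed



lemma regroup:
  fixes f :: "'k \<Rightarrow> real" and \<rho> :: "'p \<Rightarrow> real"
  assumes F: "finite F" and W: "\<And>k. k \<in> \<kappa> ` F \<Longrightarrow> (\<Sum>p\<in>{p\<in>F. \<kappa> p = k}. \<rho> p) \<le> W k"
    and f0: "\<And>k. f k \<ge> 0"
  shows "(\<Sum>p\<in>F. f (\<kappa> p) * \<rho> p) \<le> (\<Sum>k\<in>\<kappa> ` F. f k * W k)"
proof -
  have "(\<Sum>p\<in>F. f (\<kappa> p) * \<rho> p) = (\<Sum>k\<in>\<kappa> ` F. (\<Sum>p\<in>{p\<in>F. \<kappa> p = k}. f (\<kappa> p) * \<rho> p))"
    using F by (rule sum.image_gen)
  also have "\<dots> = (\<Sum>k\<in>\<kappa> ` F. f k * (\<Sum>p\<in>{p\<in>F. \<kappa> p = k}. \<rho> p))"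
    by (intro sum.cong refl) (simp add: sum_distrib_left)
  also have "\<dots> \<le> (\<Sum>k\<in>\<kappa> ` F. f k * W k)"
    using W f0 by (intro sum_mono mult_left_mono) auto
  finally show ?thesis .
qed

lemma sq_iff_sqrt: assumes "0 \<le> (nn::real)" shows "(nn \<le> c^2) = (sqrt nn \<le> \<bar>c\<bar>)"
  using assms by (metis real_sqrt_abs real_sqrt_le_iff)

lemma tailsum:
  fixes x :: "'a \<Rightarrow> complex" and nrm :: "'a \<Rightarrow> real" and nn :: real
  assumes nn: "nn > 0" and sm: "(\<lambda>k. (cmod (x k))^2) summable_on I" and S: "finite S" "S \<subseteq> I"
  shows "(\<Sum>s\<in>S. (cmod (x s))^2 * (4288 / nn + (if sqrt nn \<le> nrm s then 4288 else 0)))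
     \<le> 4288 * ((\<Sum>\<^sub>\<infinity>k\<in>I. (cmod (x k))^2) / nn + (\<Sum>\<^sub>\<infinity>k\<in>{k\<in>I. nrm k \<ge> sqrt nn}. (cmod (x k))^2))"
proof -
  let ?g = "\<lambda>k. (cmod (x k))^2"
  have "(\<Sum>s\<in>S. ?g s * (4288 / nn + (if sqrt nn \<le> nrm s then 4288 else 0)))
      = (\<Sum>s\<in>S. 4288 / nn * ?g s + 4288 * (if sqrt nn \<le> nrm s then ?g s else 0))"
    by (intro sum.cong) (auto simp: algebra_simps)
  also have "\<dots> = 4288 / nn * (\<Sum>s\<in>S. ?g s) + 4288 * (\<Sum>s\<in>{s\<in>S. sqrt nn \<le> nrm s}. ?g s)"
    using S(1) by (simp add: sum.distrib sum_distrib_left sum.inter_filter)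
  also have "\<dots> \<le> 4288 / nn * (\<Sum>\<^sub>\<infinity>k\<in>I. ?g k) + 4288 * (\<Sum>\<^sub>\<infinity>k\<in>{k\<in>I. nrm k \<ge> sqrt nn}. ?g k)"
  proof (intro add_mono mult_left_mono)
    show "(\<Sum>s\<in>S. ?g s) \<le> (\<Sum>\<^sub>\<infinity>k\<in>I. ?g k)" using sm S by (intro finite_sum_le_infsum) auto
    have "?g summable_on {k\<in>I. nrm k \<ge> sqrt nn}" using sm by (rule summable_on_subset_banach) auto
    then show "(\<Sum>s\<in>{s\<in>S. sqrt nn \<le> nrm s}. ?g s) \<le> (\<Sum>\<^sub>\<infinity>k\<in>{k\<in>I. nrm k \<ge> sqrt nn}. ?g k)"
      using S by (intro finite_sum_le_infsum) auto
  qed (use nn in auto)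
  also have "\<dots> = 4288 * ((\<Sum>\<^sub>\<infinity>k\<in>I. ?g k) / nn + (\<Sum>\<^sub>\<infinity>k\<in>{k\<in>I. nrm k \<ge> sqrt nn}. ?g k))"
    by (simp add: algebra_simps)
  finally show ?thesis .
qed

lemma finish:
  fixes f :: "'a \<Rightarrow> real"
  assumes f0: "\<And>x. f x \<ge> 0" and bd: "\<And>F. finite F \<Longrightarrow> F \<subseteq> A \<Longrightarrow> sum f F \<le> B"
  shows "f summable_on A" "infsum f A \<le> B"
proof -
  show s: "f summable_on A"
    using bd f0 by (intro nonneg_bdd_above_summable_on) (auto simp: bdd_above_def)
  show "infsum f A \<le> B" using s bd by (rule infsum_le_finite_sums)
qed

lemma final_sqrt:
  fixes Q E nn B :: real
  assumes "Q \<ge> 0" "E \<ge> 0" "nn > 0" "X \<le> 12864 * (Q / nn + E)"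
  shows "sqrt X \<le> 114 * (sqrt E + sqrt Q / sqrt nn)"
proof -
  have "sqrt X \<le> sqrt (12864 * (Q / nn + E))" using assms(4) by simp
  also have "\<dots> = sqrt 12864 * sqrt (E + Q / nn)" by (subst real_sqrt_mult[symmetric]) (simp add: add.commute)
  also have "\<dots> \<le> 114 * (sqrt E + sqrt Q / sqrt nn)"
  proof (rule mult_mono)
    show "sqrt 12864 \<le> 114" by (rule real_le_lsqrt) auto
    have "sqrt (E + Q / nn) \<le> sqrt E + sqrt (Q / nn)" using assms by (intro sqrt_add_le_add_sqrt) auto
    then show "sqrt (E + Q / nn) \<le> sqrt E + sqrt Q / sqrt nn" by (simp add: real_sqrt_divide)
  qed (use assms in auto)
  finally show ?thesis .
qed



lemma diff_sq_le: fixes x y :: real shows "(x - y)^2 \<le> 2 * (x^2 + y^2)" "(x + y)^2 \<le> 2 * (x^2 + y^2)"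
proof -
  have "0 \<le> (x + y)^2" "0 \<le> (x - y)^2" by simp_all
  then show "(x - y)^2 \<le> 2 * (x^2 + y^2)" "(x + y)^2 \<le> 2 * (x^2 + y^2)"
    by (simp_all add: power2_eq_square algebra_simps)
qed

lemma per_case:
  fixes q :: "int \<Rightarrow> complex" and b :: bc and n :: nat and lam :: complex
  assumes sm: "(\<lambda>k. (cmod (q k))^2) summable_on {k. even k}"
    and n3: "n \<ge> 3"
    and bc: "(b = Per_plus \<and> even n) \<or> (b = Per_minus \<and> odd n)"
    and lam: "lam \<in> H_reg n - D_reg n"
  shows "hs_finite (KVK (V_per q) lam) (Gamma b) \<and>
          hs_norm (KVK (V_per q) lam) (Gamma b)
            \<le> 114 * (tail_int q {k. even k} (sqrt (real n)) + l2n q {k. even k} / sqrt (real n))"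
proof -
  define a where "a j = cmod (lam - of_int (j^2))" for j :: int
  define G where "G = Gamma b"
  define Q where "Q = (\<Sum>\<^sub>\<infinity>k\<in>{k::int. even k}. (cmod (q k))^2)"
  define nn where "nn = real n"
  define E where "E = (\<Sum>\<^sub>\<infinity>k\<in>{k\<in>{k::int. even k}. real_of_int \<bar>k\<bar> \<ge> sqrt nn}. (cmod (q k))^2)"
  have nn3: "nn \<ge> 3" using n3 by (simp add: nn_def)
  have par: "even j = even n" if "j \<in> G" for j using that bc by (auto simp: G_def)
  have parG: "even k" if "j \<in> G" "m \<in> G" "k = j - m" for j m k
    using par[OF that(1)] par[OF that(2)] that(3) by auto
  have lbj: "a j \<ge> max 1 (real (dd n j)) * (real n + real (dd n j)) / 6" if "j \<in> G" for j
    unfolding a_def using lb_per[OF n3 lam par[OF that]] .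
  note sb = sum_bounds[OF n3 lbj]
  have S2': "\<And>J. finite J \<Longrightarrow> J \<subseteq> G \<Longrightarrow> (\<Sum>j\<in>J. 1 / (a j)^2) \<le> 576 / nn^2"
    using sb(3) by (simp add: nn_def)
  have S3: "(real_of_int j)^2 \<le> a j + (nn + 1)^2" if "j \<in> G" for j
    using sq_le_per[of lam n j] lam by (simp add: a_def nn_def)
  define f where "f = (\<lambda>(j, m). (cmod (KVK (V_per q) lam j m))^2)"
  have f0: "\<And>x. f x \<ge> 0" by (simp add: f_def split_beta)
  have Q0: "Q \<ge> 0" unfolding Q_def by (rule infsum_nonneg) auto
  have E0: "E \<ge> 0" unfolding E_def by (rule infsum_nonneg) auto
  have bd: "sum f F \<le> 12864 * (Q / nn + E)" if F: "finite F" "F \<subseteq> G \<times> G" for F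
  proof -
    define \<kappa> where "\<kappa> p = fst p - snd p" for p :: "int \<times> int"
    define \<rho> where "\<rho> p = (real_of_int (\<kappa> p))^2 / (a (fst p) * a (snd p))" for p
    define W where "W k = 4288 / nn + (if sqrt nn \<le> real_of_int \<bar>k\<bar> then 4288 else 0)" for k :: int
    have fe: "f p = (cmod (q (\<kappa> p)))^2 * \<rho> p" for p
      by (simp add: f_def split_beta KVK_sq V_per_def \<rho>_def \<kappa>_def a_def norm_mult power_mult_distrib norm_of_int del: of_int_diff)
    have Ksub: "\<kappa> ` F \<subseteq> {k. even k}"
    proof
      fix k assume "k \<in> \<kappa> ` F"
      then obtain j m where "(j, m) \<in> F" "k = j - m" by (auto simp: \<kappa>_def)
      then show "k \<in> {k. even k}" using F parG by blast
    qed
    have nn0: "nn > 0" using nn3 by simp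
    have "sum f F = (\<Sum>p\<in>F. (cmod (q (\<kappa> p)))^2 * \<rho> p)" by (simp add: fe)
    also have "\<dots> \<le> (\<Sum>k\<in>\<kappa> ` F. (cmod (q k))^2 * W k)"
    proof (rule regroup[OF F(1)])
      fix k assume k: "k \<in> \<kappa> ` F"
      define P where "P = {p\<in>F. \<kappa> p = k}"
      have P: "finite P" "P \<subseteq> G \<times> G" using F by (auto simp: P_def)
      have i1: "inj_on fst P" by (auto simp: inj_on_def P_def \<kappa>_def prod_eq_iff)
      have i2: "inj_on snd P" by (auto simp: inj_on_def P_def \<kappa>_def prod_eq_iff)
      have cb: "(real_of_int k)^2 \<le> 2 * ((real_of_int j)^2 + (real_of_int m)^2)" if "(j, m) \<in> P" for j m
      proof -
        have "k = j - m" using that by (simp add: P_def \<kappa>_def)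
        then show ?thesis using diff_sq_le(1)[of "real_of_int j" "real_of_int m"] by simp
      qed
      have "(\<Sum>p\<in>P. \<rho> p) = (\<Sum>p\<in>P. (real_of_int k)^2 / (a (fst p) * a (snd p)))"
        by (intro sum.cong refl) (simp add: \<rho>_def P_def)
      also have "\<dots> \<le> 4288 / nn + (if nn \<le> (real_of_int k)^2 then 4288 else 0)"
        by (rule inner[OF nn3 sb(1) sb(2) S2' S3 P i1 i2 cb]) auto
      also have "\<dots> = W k" using sq_iff_sqrt[of nn "real_of_int k"] nn3 by (simp add: W_def)
      finally show "(\<Sum>p\<in>{p\<in>F. \<kappa> p = k}. \<rho> p) \<le> W k" by (simp add: P_def)
    qed simp
    also have "\<dots> \<le> 4288 * (Q / nn + E)"
      unfolding W_def Q_def E_def using tailsum[OF nn0 sm finite_imageI[OF F(1)] Ksub] .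
    also have "\<dots> \<le> 12864 * (Q / nn + E)" using Q0 E0 nn3 by (intro mult_right_mono) auto
    finally show ?thesis .
  qed
  note fin = finish[OF f0 bd, of "G \<times> G"]
  have "hs_finite (KVK (V_per q) lam) (Gamma b)" using fin(1) by (simp add: hs_finite_def f_def G_def)
  moreover have "hs_norm (KVK (V_per q) lam) (Gamma b) \<le> 114 * (sqrt E + sqrt Q / sqrt nn)"
    unfolding hs_norm_def using final_sqrt[OF Q0 E0 _ fin(2)] nn3 by (simp add: f_def G_def)
  moreover have "sqrt E = tail_int q {k. even k} (sqrt (real n))" "sqrt Q = l2n q {k. even k}"
    by (simp_all add: E_def Q_def tail_int_def l2n_def nn_def)
  ultimately show ?thesis by (simp add: nn_def)
qed



lemma vdir_bound:
  "(cmod (V_dir qt j m))^2 \<le> (real_of_int (j - m))^2 * (cmod (qt (nat \<bar>j - m\<bar>)))^2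
     + (real_of_int (j + m))^2 * (cmod (qt (nat (j + m))))^2"
proof -
  define X where "X = (of_int \<bar>j - m\<bar> * qt (nat \<bar>j - m\<bar>) :: complex)"
  define Y where "Y = (of_int (j + m) * qt (nat (j + m)) :: complex)"
  have cX: "cmod X = \<bar>real_of_int (j - m)\<bar> * cmod (qt (nat \<bar>j - m\<bar>))"
    unfolding X_def by (simp add: norm_mult norm_of_int)
  have cY: "cmod Y = \<bar>real_of_int (j + m)\<bar> * cmod (qt (nat (j + m)))"
    unfolding Y_def by (simp add: norm_mult norm_of_int del: of_int_add)
  have "V_dir qt j m = (X - Y) / complex_of_real (sqrt 2)" by (simp add: V_dir_def X_def Y_def)
  then have "(cmod (V_dir qt j m))^2 = (cmod (X - Y))^2 / 2" by (simp add: norm_divide power_divide)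
  also have "\<dots> \<le> (cmod X + cmod Y)^2 / 2"
    by (intro divide_right_mono power_mono norm_triangle_ineq4) auto
  also have "\<dots> \<le> (cmod X)^2 + (cmod Y)^2"
    using diff_sq_le(2)[of "cmod X" "cmod Y"] by simp
  also have "\<dots> = (real_of_int (j - m))^2 * (cmod (qt (nat \<bar>j - m\<bar>)))^2
     + (real_of_int (j + m))^2 * (cmod (qt (nat (j + m))))^2"
    by (simp add: cX cY power_mult_distrib del: of_int_diff of_int_add)
  finally show ?thesis .
qed

lemma posbound:
  fixes qt :: "nat \<Rightarrow> complex" and nn :: real
  assumes nn: "nn > 0" and sm: "(\<lambda>m. (cmod (qt m))^2) summable_on {m. m \<ge> 1}"
    and K: "finite K" "\<And>k. k \<in> K \<Longrightarrow> k > 0"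
  shows "(\<Sum>k\<in>K. (cmod (qt (nat k)))^2 * (4288 / nn + (if sqrt nn \<le> real (nat k) then 4288 else 0)))
    \<le> 4288 * ((\<Sum>\<^sub>\<infinity>k\<in>{m. m \<ge> 1}. (cmod (qt k))^2) / nn + (\<Sum>\<^sub>\<infinity>k\<in>{k\<in>{m. m \<ge> 1}. real k \<ge> sqrt nn}. (cmod (qt k))^2))"
proof -
  have inj: "inj_on nat K" unfolding inj_on_def using K(2) by (metis eq_nat_nat_iff less_imp_le)
  have "(\<Sum>k\<in>K. (cmod (qt (nat k)))^2 * (4288 / nn + (if sqrt nn \<le> real (nat k) then 4288 else 0)))
     = (\<Sum>s\<in>nat ` K. (cmod (qt s))^2 * (4288 / nn + (if sqrt nn \<le> real s then 4288 else 0)))"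
    using sum.reindex[OF inj, where g="\<lambda>s. (cmod (qt s))^2 * (4288 / nn + (if sqrt nn \<le> real s then 4288 else 0))"]
    by (simp add: comp_def)
  also have "\<dots> \<le> 4288 * ((\<Sum>\<^sub>\<infinity>k\<in>{m. m \<ge> 1}. (cmod (qt k))^2) / nn + (\<Sum>\<^sub>\<infinity>k\<in>{k\<in>{m. m \<ge> 1}. real k \<ge> sqrt nn}. (cmod (qt k))^2))"
    by (rule tailsum[OF nn sm]) (use K in \<open>force\<close>)+
  finally show ?thesis .
qed



lemma dir_case:
  fixes qt :: "nat \<Rightarrow> complex" and n :: nat and lam :: complex
  assumes sm: "(\<lambda>m. (cmod (qt m))^2) summable_on {m. m \<ge> 1}"
    and n3: "n \<ge> 3"
    and lam: "lam \<in> G_reg n - D_reg n"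
  shows "hs_finite (KVK (V_dir qt) lam) (Gamma Dir) \<and>
          hs_norm (KVK (V_dir qt) lam) (Gamma Dir)
            \<le> 114 * (tail_nat qt {m. m \<ge> 1} (sqrt (real n)) + l2n qt {m. m \<ge> 1} / sqrt (real n))"
proof -
  define a where "a j = cmod (lam - of_int (j^2))" for j :: int
  define G where "G = Gamma Dir"
  define nn where "nn = real n"
  define Q where "Q = (\<Sum>\<^sub>\<infinity>k\<in>{m::nat. m \<ge> 1}. (cmod (qt k))^2)"
  define E where "E = (\<Sum>\<^sub>\<infinity>k\<in>{k\<in>{m::nat. m \<ge> 1}. real k \<ge> sqrt nn}. (cmod (qt k))^2)"
  have nn3: "nn \<ge> 3" using n3 by (simp add: nn_def)
  have nn0: "nn > 0" using nn3 by simp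
  have G1: "j \<ge> 1" if "j \<in> G" for j using that by (simp add: G_def)
  have lbj: "a j \<ge> max 1 (real (dd n j)) * (real n + real (dd n j)) / 6" if "j \<in> G" for j
    unfolding a_def using lb_dir[OF n3 lam G1[OF that]] .
  note sb = sum_bounds[OF n3 lbj]
  have S2': "\<And>J. finite J \<Longrightarrow> J \<subseteq> G \<Longrightarrow> (\<Sum>j\<in>J. 1 / (a j)^2) \<le> 576 / nn^2"
    using sb(3) by (simp add: nn_def)
  have S3: "(real_of_int j)^2 \<le> a j + (nn + 1)^2" if "j \<in> G" for j
    using sq_le_dir[of lam n j] lam by (simp add: a_def nn_def)
  define f where "f = (\<lambda>(j, m). (cmod (KVK (V_dir qt) lam j m))^2)"
  have f0: "\<And>x. f x \<ge> 0" by (simp add: f_def split_beta)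
  have Q0: "Q \<ge> 0" unfolding Q_def by (rule infsum_nonneg) auto
  have E0: "E \<ge> 0" unfolding E_def by (rule infsum_nonneg) auto
  define H where "H s = (cmod (qt s))^2 * (4288 / nn + (if sqrt nn \<le> real s then 4288 else 0))" for s :: nat
  have PB: "(\<Sum>k\<in>K. H (nat k)) \<le> 4288 * (Q / nn + E)" if "finite K" "\<And>k. k \<in> K \<Longrightarrow> k > 0" for K
    unfolding H_def Q_def E_def by (rule posbound[OF nn0 sm that])
  have bd: "sum f F \<le> 12864 * (Q / nn + E)" if F: "finite F" "F \<subseteq> G \<times> G" for F
  proof -
    define \<kappa>A where "\<kappa>A p = fst p - snd p" for p :: "int \<times> int"
    define \<kappa>B where "\<kappa>B p = fst p + snd p" for p :: "int \<times> int"
    define \<rho>A where "\<rho>A p = (real_of_int (\<kappa>A p))^2 / (a (fst p) * a (snd p))" for p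
    define \<rho>B where "\<rho>B p = (real_of_int (\<kappa>B p))^2 / (a (fst p) * a (snd p))" for p
    define gA where "gA k = (cmod (qt (nat \<bar>k\<bar>)))^2" for k :: int
    define gB where "gB k = (cmod (qt (nat k)))^2" for k :: int
    define WA where "WA k = (if k = 0 then 0 else 4288 / nn + (if sqrt nn \<le> real_of_int \<bar>k\<bar> then 4288 else 0))" for k :: int
    define WB where "WB k = 4288 / nn + (if sqrt nn \<le> real_of_int \<bar>k\<bar> then 4288 else 0)" for k :: int
    have posF: "a (fst p) > 0" "a (snd p) > 0" if "p \<in> F" for p using that F sb(1) by auto
    have fe: "f p \<le> gA (\<kappa>A p) * \<rho>A p + gB (\<kappa>B p) * \<rho>B p" if "p \<in> F" for p
    proof -
      obtain j m where p: "p = (j, m)" by fastforce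
      have "f p = (cmod (V_dir qt j m))^2 / (a j * a m)"
        by (simp add: f_def p KVK_sq a_def)
      also have "\<dots> \<le> ((real_of_int (j - m))^2 * (cmod (qt (nat \<bar>j - m\<bar>)))^2
          + (real_of_int (j + m))^2 * (cmod (qt (nat (j + m))))^2) / (a j * a m)"
        using posF[OF that] p by (intro divide_right_mono vdir_bound) auto
      also have "\<dots> = gA (\<kappa>A p) * \<rho>A p + gB (\<kappa>B p) * \<rho>B p"
        by (simp add: p gA_def gB_def \<rho>A_def \<rho>B_def \<kappa>A_def \<kappa>B_def add_divide_distrib mult.commute del: of_int_diff of_int_add)
      finally show ?thesis .
    qed
    have innerI: "(\<Sum>p\<in>{p\<in>F. \<kappa> p = k}. (real_of_int (\<kappa> p))^2 / (a (fst p) * a (snd p)))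
         \<le> 4288 / nn + (if sqrt nn \<le> real_of_int \<bar>k\<bar> then 4288 else 0)"
      if inj1: "inj_on fst {p\<in>F. \<kappa> p = k}" and inj2: "inj_on snd {p\<in>F. \<kappa> p = k}"
        and cbk: "\<And>j m. \<kappa> (j, m) = k \<Longrightarrow> (real_of_int k)^2 \<le> 2 * ((real_of_int j)^2 + (real_of_int m)^2)"
      for \<kappa> k
    proof -
      define P where "P = {p\<in>F. \<kappa> p = k}"
      have P: "finite P" "P \<subseteq> G \<times> G" using F by (auto simp: P_def)
      have "(\<Sum>p\<in>P. (real_of_int (\<kappa> p))^2 / (a (fst p) * a (snd p))) = (\<Sum>p\<in>P. (real_of_int k)^2 / (a (fst p) * a (snd p)))"
        by (intro sum.cong refl) (simp add: P_def)
      also have "\<dots> \<le> 4288 / nn + (if nn \<le> (real_of_int k)^2 then 4288 else 0)"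
        by (rule inner[OF nn3 sb(1) sb(2) S2' S3 P]) (use inj1 inj2 cbk in \<open>auto simp: P_def\<close>)
      also have "\<dots> = 4288 / nn + (if sqrt nn \<le> real_of_int \<bar>k\<bar> then 4288 else 0)"
        using sq_iff_sqrt[of nn "real_of_int k"] nn3 by simp
      finally show ?thesis by (simp add: P_def)
    qed
    have gA0: "gA k \<ge> 0" "gB k \<ge> 0" for k by (simp_all add: gA_def gB_def)
    have c1: "sum f F \<le> (\<Sum>p\<in>F. gA (\<kappa>A p) * \<rho>A p) + (\<Sum>p\<in>F. gB (\<kappa>B p) * \<rho>B p)"
      using fe by (simp add: sum.distrib[symmetric] sum_mono)
    have c2: "(\<Sum>p\<in>F. gA (\<kappa>A p) * \<rho>A p) + (\<Sum>p\<in>F. gB (\<kappa>B p) * \<rho>B p) \<le> (\<Sum>k\<in>\<kappa>A ` F. gA k * WA k) + (\<Sum>k\<in>\<kappa>B ` F. gB k * WB k)"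
    proof (intro add_mono)
      show "(\<Sum>p\<in>F. gA (\<kappa>A p) * \<rho>A p) \<le> (\<Sum>k\<in>\<kappa>A ` F. gA k * WA k)"
      proof (rule regroup[OF F(1)])
        fix k assume "k \<in> \<kappa>A ` F"
        show "(\<Sum>p\<in>{p\<in>F. \<kappa>A p = k}. \<rho>A p) \<le> WA k"
        proof (cases "k = 0")
          case True
          then show ?thesis by (simp add: WA_def \<rho>A_def)
        next
          case False
          have "(\<Sum>p\<in>{p\<in>F. \<kappa>A p = k}. \<rho>A p) \<le> 4288 / nn + (if sqrt nn \<le> real_of_int \<bar>k\<bar> then 4288 else 0)"
            unfolding \<rho>A_def
            by (rule innerI) (auto simp: inj_on_def \<kappa>A_def prod_eq_iff intro: diff_sq_le(1)[of "real_of_int _" "real_of_int _", simplified])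
          then show ?thesis using False by (simp add: WA_def)
        qed
      qed (rule gA0)
      show "(\<Sum>p\<in>F. gB (\<kappa>B p) * \<rho>B p) \<le> (\<Sum>k\<in>\<kappa>B ` F. gB k * WB k)"
      proof (rule regroup[OF F(1)])
        fix k assume "k \<in> \<kappa>B ` F"
        show "(\<Sum>p\<in>{p\<in>F. \<kappa>B p = k}. \<rho>B p) \<le> WB k"
          unfolding \<rho>B_def WB_def
          by (rule innerI) (auto simp: inj_on_def \<kappa>B_def prod_eq_iff intro: diff_sq_le(2)[of "real_of_int _" "real_of_int _", simplified])
      qed (rule gA0)
    qed
    have c3: "(\<Sum>k\<in>\<kappa>B ` F. gB k * WB k) \<le> 4288 * (Q / nn + E)"
    proof -
      have pos: "k > 0" if kF: "k \<in> \<kappa>B ` F" for k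
      proof -
        obtain j m where jm: "(j, m) \<in> F" "k = j + m" using kF by (auto simp: \<kappa>B_def)
        then have "j \<ge> 1" "m \<ge> 1" using F G1 by auto
        then show ?thesis using jm by simp
      qed
      have "(\<Sum>k\<in>\<kappa>B ` F. gB k * WB k) = (\<Sum>k\<in>\<kappa>B ` F. H (nat k))"
      proof (intro sum.cong refl)
        fix k assume "k \<in> \<kappa>B ` F"
        then have "k > 0" by (rule pos)
        then have "real (nat k) = real_of_int \<bar>k\<bar>" by simp
        then show "gB k * WB k = H (nat k)" by (simp add: gB_def WB_def H_def)
      qed
      also have "\<dots> \<le> 4288 * (Q / nn + E)" using PB F pos by auto
      finally show ?thesis .
    qed
    have c4: "(\<Sum>k\<in>\<kappa>A ` F. gA k * WA k) \<le> 2 * (4288 * (Q / nn + E))"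
    proof -
      define K where "K = \<kappa>A ` F"
      have Kf: "finite K" using F by (simp add: K_def)
      have eq: "gA k * WA k = (if k > 0 then H (nat k) else 0) + (if k < 0 then H (nat (- k)) else 0)" for k
        by (auto simp: gA_def WA_def H_def)
      have s1: "(\<Sum>k\<in>K. gA k * WA k) = (\<Sum>k\<in>{k\<in>K. k > 0}. H (nat k)) + (\<Sum>k\<in>{k\<in>K. k < 0}. H (nat (- k)))"
        using Kf by (simp add: eq sum.distrib sum.inter_filter)
      have s2: "(\<Sum>k\<in>{k\<in>K. k < 0}. H (nat (- k))) = (\<Sum>k\<in>uminus ` {k\<in>K. k < 0}. H (nat k))"
        by (subst sum.reindex) (auto simp: comp_def)
      have s3: "(\<Sum>k\<in>{k\<in>K. k > 0}. H (nat k)) \<le> 4288 * (Q / nn + E)" by (rule PB) (use Kf in auto)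
      have s4: "(\<Sum>k\<in>uminus ` {k\<in>K. k < 0}. H (nat k)) \<le> 4288 * (Q / nn + E)" by (rule PB) (use Kf in auto)
      show ?thesis using s1 s2 s3 s4 unfolding K_def by linarith
    qed
    have X0: "Q / nn + E \<ge> 0" using Q0 E0 nn0 by simp
    show ?thesis using c1 c2 c3 c4 X0 by linarith
  qed
  note fin = finish[OF f0 bd, of "G \<times> G"]
  have "hs_finite (KVK (V_dir qt) lam) (Gamma Dir)" using fin(1) by (simp add: hs_finite_def f_def G_def)
  moreover have "hs_norm (KVK (V_dir qt) lam) (Gamma Dir) \<le> 114 * (sqrt E + sqrt Q / sqrt nn)"
    unfolding hs_norm_def using final_sqrt[OF Q0 E0 _ fin(2)] nn3 by (simp add: f_def G_def)
  moreover have "sqrt E = tail_nat qt {m. m \<ge> 1} (sqrt (real n))" "sqrt Q = l2n qt {m. m \<ge> 1}"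
    by (simp_all add: E_def Q_def tail_nat_def l2n_def nn_def)
  ultimately show ?thesis by (simp add: nn_def)
qed

theorem lemma19:
  "\<exists>C > 0.
     (\<forall>(q :: int \<Rightarrow> complex) (b :: bc) (n :: nat) lam.
        (\<lambda>k. (cmod (q k))^2) summable_on {k. even k} \<longrightarrow>
        n \<ge> 3 \<longrightarrow>
        ((b = Per_plus \<and> even n) \<or> (b = Per_minus \<and> odd n)) \<longrightarrow>
        lam \<in> H_reg n - D_reg n \<longrightarrow>
          hs_finite (KVK (V_per q) lam) (Gamma b) \<and>
          hs_norm (KVK (V_per q) lam) (Gamma b)
            \<le> C * (tail_int q {k. even k} (sqrt (real n)) + l2n q {k. even k} / sqrt (real n)))
   \<and> (\<forall>(qt :: nat \<Rightarrow> complex) (n :: nat) lam.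
        (\<lambda>m. (cmod (qt m))^2) summable_on {m. m \<ge> 1} \<longrightarrow>
        n \<ge> 3 \<longrightarrow>
        lam \<in> G_reg n - D_reg n \<longrightarrow>
          hs_finite (KVK (V_dir qt) lam) (Gamma Dir) \<and>
          hs_norm (KVK (V_dir qt) lam) (Gamma Dir)
            \<le> C * (tail_nat qt {m. m \<ge> 1} (sqrt (real n)) + l2n qt {m. m \<ge> 1} / sqrt (real n)))"
  by (rule exI[of _ 114]) (use per_case dir_case in auto)


end
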